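(* Let $n\ge2$, $\varepsilon\in\mathbb{Z}/2\mathbb{Z}$, $\nu\in\mathbb{C}$ with $\operatorname{Re}\nu>n/2-1$, and $f\in W^{\infty}_{-\nu,\varepsilon}$. Regard $f$ as a function on $\mathbb{R}^{n-1}$ via $x\mapsto f(u(x))$, where $u(x)$ is the $n\times n$ matrix equal to the identity except that its first row is $(1,x_{n-1},\dots,x_1)$, and regard $I_\nu f\in\widetilde W^\infty_{\nu,\varepsilon}$ as a function on $\mathbb{R}^{n-1}$ via $y\mapsto (I_\nu f)(\widetilde u(y))$, where $\widetilde u(y)$ is the identity matrix except that its last column is $(-y_1,\dots,-y_{n-1},1)^T$. Then \[ (I_\nu f)(\widetilde u(y))=\int_{z\in\mathbb{R}^{n-1}}f(u(z))\,\Big|\sum_{j=2}^{n-1}y_jz_{n+1-j}-y_1-z_1\Big|^{\nu-n/2}\operatorname{sgn}\Big(\sum_{j=2}^{n-1}y_jz_{n+1-j}-y_1-z_1\Big)^{\varepsilon}dz . \]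
   Context: Let $G=GL(n,\mathbb{R})$ and $w_{\mathrm{long}}$ the $n\times n$ antidiagonal permutation matrix. Let $P\subset G$ be the group of matrices with first row $(a,0,\dots,0)$, $a\in\mathbb{R}^*$, and lower right block $B\in GL(n-1,\mathbb{R})$; $\widetilde P$ the group of matrices with last column $(0,\dots,0,a)^T$ and upper left block $B\in GL(n-1,\mathbb{R})$. Let $U=\{u(x):x\in\mathbb{R}^{n-1}\}$ with Haar measure $du=dx$ (Lebesgue). For $\mu\in\mathbb{C}$, $W^\infty_{\mu,\varepsilon}$ is the space of smooth $f$ on $G$ with $f(gp)=|a|^{-(n-1)(\mu-n/2)/n}\operatorname{sgn}(a)^\varepsilon|\det B|^{(\mu-n/2)/n}f(g)$ for $p\in P$, and $\widetilde W^\infty_{\mu,\varepsilon}$ the space of smooth $f$ with $f(g\tilde p)=|\det B|^{-(\mu-n/2)/n}|a|^{(n-1)(\mu-n/2)/n}\operatorname{sgn}(a)^\varepsilon f(g)$ for $\tilde p\in\widetilde P$. The standard intertwining operator $I_\nu:W^\infty_{-\nu,\varepsilon}\to\widetilde W^\infty_{\nu,\varepsilon}$ is $(I_\nu f)(g)=\int_U f(g\,w_{\mathrm{long}}\,u)\,du$. *)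

theory Defs
  imports "HOL-Analysis.Analysis"
begin

text \<open>Matrices in GL(n,R) are elements of real^'n^'n, where 'n is a finite linearly
ordered index type with CARD('n) = n; the index i corresponds to the row/column
number pos i in {1..n}.\<close>

definition pos :: "'n::{finite,linorder} \<Rightarrow> nat" where
  "pos i = card {j. j < i} + 1"

definition GLset :: "(real^'n^'n) set" where
  "GLset = {M. invertible M}"

text \<open>C-infinity on a set S: f lies in a family of continuous functions closed under
taking directional (partial) derivatives along the standard basis directions.\<close>
definition smooth_on :: "('a::euclidean_space) set \<Rightarrow> ('a \<Rightarrow> complex) \<Rightarrow> bool" where
  "smooth_on S f \<longleftrightarrow> (\<exists>F. f \<in> F \<and> (\<forall>g\<in>F. continuous_on S g \<and>
      (\<forall>v\<in>Basis. \<exists>g'\<in>F. \<forall>x\<in>S.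
          ((\<lambda>t. g (x + t *\<^sub>R v)) has_vector_derivative g' x) (at 0))))"

definition a_entry :: "((real, 'n::{finite,linorder}) vec, 'n) vec \<Rightarrow> real" where
  "a_entry p = p $ Min UNIV $ Min UNIV"

definition block_det :: "'n::{finite,linorder} set \<Rightarrow> ((real, 'n) vec, 'n) vec \<Rightarrow> real" where
  "block_det S M = (\<Sum>\<sigma> | \<sigma> permutes S. of_int (sign \<sigma>) * (\<Prod>i\<in>S. M $ i $ \<sigma> i))"

definition lowerB_det :: "((real, 'n::{finite,linorder}) vec, 'n) vec \<Rightarrow> real" where
  "lowerB_det p = block_det {i::'n. pos i \<ge> 2} p"

definition upperB_det :: "((real, 'n::{finite,linorder}) vec, 'n) vec \<Rightarrow> real" where
  "upperB_det p = block_det {i::'n. pos i \<le> CARD('n) - 1} p"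

definition last_entry :: "((real, 'n::{finite,linorder}) vec, 'n) vec \<Rightarrow> real" where
  "last_entry p = p $ Max UNIV $ Max UNIV"

definition Pgrp :: "(((real, 'n::{finite,linorder}) vec, 'n) vec) set" where
  "Pgrp = {p. (\<forall>i j. pos i = 1 \<and> pos j \<ge> 2 \<longrightarrow> p $ i $ j = 0)
              \<and> a_entry p \<noteq> 0 \<and> lowerB_det p \<noteq> 0}"

definition Ptgrp :: "(((real, 'n::{finite,linorder}) vec, 'n) vec) set" where
  "Ptgrp = {p. (\<forall>i j. pos j = CARD('n) \<and> pos i \<le> CARD('n) - 1 \<longrightarrow> p $ i $ j = 0)
              \<and> last_entry p \<noteq> 0 \<and> upperB_det p \<noteq> 0}"

definition rpow :: "real \<Rightarrow> complex \<Rightarrow> complex" where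
  "rpow x s = complex_of_real x powr s"

definition Wspace :: "complex \<Rightarrow> nat \<Rightarrow> (((real, 'n::{finite,linorder}) vec, 'n) vec \<Rightarrow> complex) set" where
  "Wspace \<mu> \<epsilon> = {f. smooth_on GLset f \<and>
     (\<forall>g\<in>GLset. \<forall>p\<in>Pgrp. f (g ** p) =
        rpow \<bar>a_entry p\<bar> (- (of_nat (CARD('n) - 1)) * (\<mu> - of_nat CARD('n) / 2) / of_nat CARD('n))
        * of_real (sgn (a_entry p) ^ \<epsilon>)
        * rpow \<bar>lowerB_det p\<bar> ((\<mu> - of_nat CARD('n) / 2) / of_nat CARD('n)) * f g)}"

definition Wtspace :: "complex \<Rightarrow> nat \<Rightarrow> (((real, 'n::{finite,linorder}) vec, 'n) vec \<Rightarrow> complex) set" where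
  "Wtspace \<mu> \<epsilon> = {f. smooth_on GLset f \<and>
     (\<forall>g\<in>GLset. \<forall>p\<in>Ptgrp. f (g ** p) =
        rpow \<bar>upperB_det p\<bar> (- (\<mu> - of_nat CARD('n) / 2) / of_nat CARD('n))
        * rpow \<bar>last_entry p\<bar> (of_nat (CARD('n) - 1) * (\<mu> - of_nat CARD('n) / 2) / of_nat CARD('n))
        * of_real (sgn (last_entry p) ^ \<epsilon>) * f g)}"

definition wlong :: "((real, 'n::{finite,linorder}) vec, 'n) vec" where
  "wlong = (\<chi> i j. if pos i + pos j = CARD('n) + 1 then 1 else 0)"

definition umat :: "(nat \<Rightarrow> real) \<Rightarrow> ((real, 'n::{finite,linorder}) vec, 'n) vec" where
  "umat x = (\<chi> i j. if i = j then 1 else if pos i = 1 then x (CARD('n) + 1 - pos j) else 0)"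

definition utmat :: "(nat \<Rightarrow> real) \<Rightarrow> ((real, 'n::{finite,linorder}) vec, 'n) vec" where
  "utmat y = (\<chi> i j. if i = j then 1 else if pos j = CARD('n) then - y (pos i) else 0)"

definition Leb :: "nat \<Rightarrow> (nat \<Rightarrow> real) measure" where
  "Leb m = PiM {1..m} (\<lambda>_. lborel)"

definition Iop :: "complex \<Rightarrow> (((real, 'n::{finite,linorder}) vec, 'n) vec \<Rightarrow> complex) \<Rightarrow> ((real, 'n) vec, 'n) vec \<Rightarrow> complex" where
  "Iop \<nu> f g = (LINT x | Leb (CARD('n) - 1). f (g ** wlong ** umat x))"

end

theory Submission
  imports Defs "HOL-Complex_Analysis.Cauchy_Integral_Theorem"
begin


lemma inv_lborel:
  "distr (density lborel (\<lambda>t::real. ennreal ((inverse t)^2))) lborel inverse = lborel"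
proof (rule lborel_eqI[symmetric])
  fix l u :: real assume "\<And>b. b \<in> Basis \<Longrightarrow> l \<bullet> b \<le> u \<bullet> b"
  hence lu: "l \<le> u" by simp
  let ?S = "-{0::real}"
  have S: "?S \<in> sets lebesgue" by simp
  have der: "\<And>x. x \<in> ?S \<Longrightarrow> (inverse has_field_derivative (- (inverse x ^ 2))) (at x within ?S)"
    using DERIV_inverse by (auto intro: has_field_derivative_at_within simp: power2_eq_square)
  have inj: "inj_on inverse ?S" by (auto intro: inj_onI)
  have img: "inverse ` ?S = ?S"
  proof
    show "inverse ` ?S \<subseteq> ?S" by auto
    show "?S \<subseteq> inverse ` ?S"
    proof
      fix x :: real assume "x \<in> ?S" thus "x \<in> inverse ` ?S"
        by (intro image_eqI[of _ _ "inverse x"]) auto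
    qed
  qed
  have c1: "((\<lambda>x. 1::real) has_integral (u - l)) (box l u)"
    using has_integral_measure_lborel[of "box l u"] lu by (simp add: emeasure_lborel_box_eq)
  hence "((\<lambda>x. if x \<in> box l u then 1 else 0) has_integral (u - l)) UNIV"
    by (simp only: has_integral_restrict_UNIV)
  moreover have "indicator (box l u) = (\<lambda>x. if x \<in> box l u then 1 else (0::real))"
    by (auto simp: indicator_def)
  ultimately have c0: "(indicator (box l u) has_integral (u - l)) UNIV" by simp
  have c2: "(indicator (box l u) has_integral (u - l)) ?S"
  proof (subst has_integral_spike_set_eq[where S="?S" and T=UNIV])
    show "negligible {x \<in> ?S - UNIV. indicator (box l u) x \<noteq> (0::real)}" by simp
    show "negligible {x \<in> UNIV - ?S. indicator (box l u) x \<noteq> (0::real)}"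
      by (rule negligible_subset[of "{0}"]) auto
  qed (rule c0)
  have ai: "(indicator (box l u) :: real \<Rightarrow> real) absolutely_integrable_on ?S"
    using c2 by (intro nonnegative_absolutely_integrable_1) (auto simp: indicator_def)
  have "(\<lambda>x. \<bar>- (inverse x ^ 2)\<bar> * indicator (box l u) (inverse x)) absolutely_integrable_on ?S \<and>
        integral ?S (\<lambda>x. \<bar>- (inverse x ^ 2)\<bar> * indicator (box l u) (inverse x)) = u - l"
    using has_absolute_integral_change_of_variables_1'[OF S der inj, of "indicator (box l u)" "u - l"]
      img ai c2 by (simp add: integral_unique)
  hence hi: "((\<lambda>x. \<bar>- (inverse x ^ 2)\<bar> * indicator (box l u) (inverse x)) has_integral (u - l)) ?S"
    using set_lebesgue_integral_eq_integral(1) by (metis has_integral_integrable_integral)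
  have mi: "(inverse::real\<Rightarrow>real) \<in> borel_measurable borel"
    using borel_measurable_inverse[of "\<lambda>x. x" borel] by simp
  have mi2: "inverse -` box l u \<in> sets (borel::real measure)"
    using measurable_sets[OF mi, of "box l u"] by simp
  have "emeasure (distr (density lborel (\<lambda>t::real. ennreal ((inverse t)^2))) lborel inverse) (box l u)
     = emeasure (density lborel (\<lambda>t::real. ennreal ((inverse t)^2))) (inverse -` box l u)"
    by (subst emeasure_distr) (auto simp: mi2)
  also have "\<dots> = (\<integral>\<^sup>+ t. ennreal ((inverse t)^2) * indicator (inverse -` box l u) t \<partial>lborel)"
    using mi2 by (subst emeasure_density) auto
  also have "\<dots> = (\<integral>\<^sup>+ t. ennreal (\<bar>- (inverse t ^ 2)\<bar> * indicator (box l u) (inverse t)) * indicator ?S t \<partial>lborel)"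
    by (intro nn_integral_cong) (auto simp: indicator_def)
  also have "\<dots> = ennreal (u - l)"
    by (rule nn_integral_has_integral_lebesgue'[OF _ hi]) auto
  finally show "emeasure (distr (density lborel (\<lambda>t::real. ennreal ((inverse t)^2))) lborel inverse) (box l u)
     = (\<Prod>b\<in>Basis. (u - l) \<bullet> b)" by simp
qed simp


lemma psf: "product_sigma_finite (\<lambda>_::'i. lborel :: real measure)"
  unfolding product_sigma_finite_def by (auto intro: sigma_finite_lborel)
thm lborel_distr_mult
lemma lborel_scale_emeasure:
  fixes c :: real assumes c: "c \<noteq> 0" and B: "B \<in> sets borel"
  shows "emeasure lborel ((\<lambda>t. c * t) -` B) = ennreal (inverse \<bar>c\<bar>) * emeasure lborel B"
proof -
  have "emeasure lborel ((\<lambda>t. c * t) -` B) = emeasure (distr lborel borel ((*) c)) B"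
    using B by (subst emeasure_distr) auto
  also have "\<dots> = emeasure (density lborel (\<lambda>_. ennreal (inverse \<bar>c\<bar>))) B"
    using lborel_distr_mult[OF c] by simp
  also have "\<dots> = ennreal (inverse \<bar>c\<bar>) * emeasure lborel B"
    using B by (simp add: emeasure_density_const)
  finally show ?thesis .
qed

lemma PiM_scale_perm:
  fixes I :: "nat set" and c :: real and \<sigma> :: "nat \<Rightarrow> nat"
  assumes fin: "finite I" and c: "c \<noteq> 0" and sI: "\<And>k. k \<in> I \<Longrightarrow> \<sigma> k \<in> I"
    and ss: "\<And>k. k \<in> I \<Longrightarrow> \<sigma> (\<sigma> k) = k"
  shows "density (distr (PiM I (\<lambda>_. lborel)) (PiM I (\<lambda>_. lborel)) (\<lambda>r. \<lambda>k\<in>I. c * r (\<sigma> k)))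
           (\<lambda>_. ennreal (\<bar>c\<bar> ^ card I)) = PiM I (\<lambda>_. lborel)"
proof (rule product_sigma_finite.PiM_eqI[OF psf fin])
  have T: "(\<lambda>r. \<lambda>k\<in>I. c * r (\<sigma> k)) \<in> PiM I (\<lambda>_. lborel) \<rightarrow>\<^sub>M PiM I (\<lambda>_. lborel)"
    by (rule measurable_restrict) (use sI in auto)
  show "sets (density (distr (PiM I (\<lambda>_. lborel)) (PiM I (\<lambda>_. lborel)) (\<lambda>r. \<lambda>k\<in>I. c * r (\<sigma> k)))
           (\<lambda>_. ennreal (\<bar>c\<bar> ^ card I))) = sets (PiM I (\<lambda>_. lborel))" by simp
  fix A assume A: "\<And>i. i \<in> I \<Longrightarrow> A i \<in> sets (lborel::real measure)"
  have mcm: "(\<lambda>t::real. c * t) \<in> borel_measurable borel" by measurable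
  have mc: "\<And>B. B \<in> sets borel \<Longrightarrow> (\<lambda>t::real. c * t) -` B \<in> sets borel"
    using measurable_sets[OF mcm] by simp
  have PA: "Pi\<^sub>E I A \<in> sets (PiM I (\<lambda>_. lborel))"
    using A by (intro sets_PiM_I_finite fin) auto
  have pre: "(\<lambda>r. \<lambda>k\<in>I. c * r (\<sigma> k)) -` Pi\<^sub>E I A \<inter> space (PiM I (\<lambda>_. lborel))
      = Pi\<^sub>E I (\<lambda>j. (\<lambda>t. c * t) -` A (\<sigma> j))"
  proof (intro equalityI subsetI)
    fix x assume "x \<in> (\<lambda>r. \<lambda>k\<in>I. c * r (\<sigma> k)) -` Pi\<^sub>E I A \<inter> space (PiM I (\<lambda>_. lborel))"
    then show "x \<in> Pi\<^sub>E I (\<lambda>j. (\<lambda>t. c * t) -` A (\<sigma> j))"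
      using sI ss by (auto simp: space_PiM PiE_iff) (metis sI ss)
  next
    fix x assume x: "x \<in> Pi\<^sub>E I (\<lambda>j. (\<lambda>t. c * t) -` A (\<sigma> j))"
    have "c * x (\<sigma> i) \<in> A i" if "i \<in> I" for i
      using x sI[OF that] ss[OF that] by (auto simp: PiE_iff)
    then show "x \<in> (\<lambda>r. \<lambda>k\<in>I. c * r (\<sigma> k)) -` Pi\<^sub>E I A \<inter> space (PiM I (\<lambda>_. lborel))"
      using x by (auto simp: space_PiM PiE_iff)
  qed
  have "emeasure (density (distr (PiM I (\<lambda>_. lborel)) (PiM I (\<lambda>_. lborel)) (\<lambda>r. \<lambda>k\<in>I. c * r (\<sigma> k)))
           (\<lambda>_. ennreal (\<bar>c\<bar> ^ card I))) (Pi\<^sub>E I A)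
     = ennreal (\<bar>c\<bar> ^ card I) * emeasure (PiM I (\<lambda>_. lborel)) ((\<lambda>r. \<lambda>k\<in>I. c * r (\<sigma> k)) -` Pi\<^sub>E I A \<inter> space (PiM I (\<lambda>_. lborel)))"
    using PA T by (simp add: emeasure_density_const emeasure_distr)
  also have "\<dots> = ennreal (\<bar>c\<bar> ^ card I) * (\<Prod>j\<in>I. emeasure lborel ((\<lambda>t. c * t) -` A (\<sigma> j)))"
    unfolding pre using A sI mc
    by (subst product_sigma_finite.emeasure_PiM[OF psf fin]) auto
  also have "\<dots> = ennreal (\<bar>c\<bar> ^ card I) * (\<Prod>j\<in>I. ennreal (inverse \<bar>c\<bar>) * emeasure lborel (A (\<sigma> j)))"
    using A sI c by (intro arg_cong2[where f="(*)"] prod.cong refl lborel_scale_emeasure) auto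
  also have "\<dots> = (\<Prod>j\<in>I. emeasure lborel (A (\<sigma> j)))"
  proof -
    have e: "ennreal (\<bar>c\<bar> ^ card I) * ennreal (inverse \<bar>c\<bar> ^ card I) = 1"
    proof -
      have "ennreal (\<bar>c\<bar> ^ card I) * ennreal (inverse \<bar>c\<bar> ^ card I)
          = ennreal (\<bar>c\<bar> ^ card I * inverse \<bar>c\<bar> ^ card I)"
        by (simp add: ennreal_mult)
      also have "\<bar>c\<bar> ^ card I * inverse \<bar>c\<bar> ^ card I = 1"
        using c by (simp add: power_mult_distrib[symmetric])
      finally show ?thesis by simp
    qed
    show ?thesis by (simp add: prod.distrib ennreal_power mult.assoc[symmetric] e)
  qed
  also have "(\<Prod>j\<in>I. emeasure lborel (A (\<sigma> j))) = (\<Prod>j\<in>I. emeasure lborel (A j))"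
    by (rule prod.reindex_bij_witness[where i=\<sigma> and j=\<sigma>]) (use sI ss in auto)
  finally show "emeasure (density (distr (PiM I (\<lambda>_. lborel)) (PiM I (\<lambda>_. lborel)) (\<lambda>r. \<lambda>k\<in>I. c * r (\<sigma> k)))
           (\<lambda>_. ennreal (\<bar>c\<bar> ^ card I))) (Pi\<^sub>E I A) = (\<Prod>i\<in>I. emeasure lborel (A i))"
    by simp
qed


lemma inv_nn:
  fixes g :: "real \<Rightarrow> ennreal" assumes g[measurable]: "g \<in> borel_measurable borel"
  shows "(\<integral>\<^sup>+t. ennreal ((inverse t)^2) * g (b + inverse t) \<partial>lborel) = (\<integral>\<^sup>+u. g u \<partial>lborel)"
proof -
  have "(\<integral>\<^sup>+u. g u \<partial>lborel) = (\<integral>\<^sup>+u. g (b + u) \<partial>lborel)"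
    using nn_integral_real_affine[of g 1 b] by simp
  also have "\<dots> = (\<integral>\<^sup>+u. g (b + u) \<partial>distr (density lborel (\<lambda>t::real. ennreal ((inverse t)^2))) lborel inverse)"
    by (simp add: inv_lborel)
  also have "\<dots> = (\<integral>\<^sup>+t. g (b + inverse t) \<partial>density lborel (\<lambda>t::real. ennreal ((inverse t)^2)))"
    by (subst nn_integral_distr) auto
  also have "\<dots> = (\<integral>\<^sup>+t. ennreal ((inverse t)^2) * g (b + inverse t) \<partial>lborel)"
    by (subst nn_integral_density) auto
  finally show ?thesis ..
qed

lemma nn_scale_perm:
  fixes I :: "nat set" and c :: real and \<sigma> :: "nat \<Rightarrow> nat"
  assumes fin: "finite I" and c: "c \<noteq> 0" and sI: "\<And>k. k \<in> I \<Longrightarrow> \<sigma> k \<in> I"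
    and ss: "\<And>k. k \<in> I \<Longrightarrow> \<sigma> (\<sigma> k) = k"
    and H[measurable]: "H \<in> borel_measurable (PiM I (\<lambda>_. lborel))"
  shows "ennreal (\<bar>c\<bar> ^ card I) * (\<integral>\<^sup>+r. H (\<lambda>k\<in>I. c * r (\<sigma> k)) \<partial>PiM I (\<lambda>_. lborel))
     = (\<integral>\<^sup>+r. H r \<partial>PiM I (\<lambda>_. lborel))"
proof -
  have T[measurable]: "(\<lambda>r. \<lambda>k\<in>I. c * r (\<sigma> k)) \<in> PiM I (\<lambda>_. lborel) \<rightarrow>\<^sub>M PiM I (\<lambda>_. lborel)"
    by (rule measurable_restrict) (use sI in auto)
  have "(\<integral>\<^sup>+r. H r \<partial>PiM I (\<lambda>_. lborel)) =
     (\<integral>\<^sup>+r. H r \<partial>density (distr (PiM I (\<lambda>_. lborel)) (PiM I (\<lambda>_. lborel)) (\<lambda>r. \<lambda>k\<in>I. c * r (\<sigma> k)))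
           (\<lambda>_. ennreal (\<bar>c\<bar> ^ card I)))"
    by (simp add: PiM_scale_perm[OF fin c sI ss])
  also have "\<dots> = (\<integral>\<^sup>+r. ennreal (\<bar>c\<bar> ^ card I) * H r \<partial>distr (PiM I (\<lambda>_. lborel)) (PiM I (\<lambda>_. lborel)) (\<lambda>r. \<lambda>k\<in>I. c * r (\<sigma> k)))"
    by (subst nn_integral_density) auto
  also have "\<dots> = (\<integral>\<^sup>+r. ennreal (\<bar>c\<bar> ^ card I) * H (\<lambda>k\<in>I. c * r (\<sigma> k)) \<partial>PiM I (\<lambda>_. lborel))"
    by (subst nn_integral_distr) auto
  also have "\<dots> = ennreal (\<bar>c\<bar> ^ card I) * (\<integral>\<^sup>+r. H (\<lambda>k\<in>I. c * r (\<sigma> k)) \<partial>PiM I (\<lambda>_. lborel))"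
    by (subst nn_integral_cmult) auto
  finally show ?thesis ..
qed


definition Tm :: "nat \<Rightarrow> (nat \<Rightarrow> real) \<Rightarrow> (nat \<Rightarrow> real) \<Rightarrow> (nat \<Rightarrow> real)" where
  "Tm m y x = (\<lambda>k\<in>{1..m}. if k = 1 then (\<Sum>j=2..m. y j * (- inverse (x 1) * x j)) - y 1 + inverse (x 1)
                else - inverse (x 1) * x (m + 2 - k))"

definition Psi :: "nat \<Rightarrow> (nat \<Rightarrow> real) \<Rightarrow> real \<Rightarrow> (nat \<Rightarrow> real) \<Rightarrow> (nat \<Rightarrow> real)" where
  "Psi m y v s = (\<lambda>k\<in>{1..m}. if k = 1 then (\<Sum>j=2..m. y j * s (m + 2 - j)) - y 1 + v else s k)"

lemma comp_meas: "j \<in> I \<Longrightarrow> (\<lambda>x. x j) \<in> borel_measurable (PiM I (\<lambda>_. lborel :: real measure))"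
  by simp

lemma Tm_meas: "Tm m y \<in> PiM {1..m} (\<lambda>_. lborel) \<rightarrow>\<^sub>M PiM {1..m} (\<lambda>_. lborel)"
  unfolding Tm_def
proof (rule measurable_restrict)
  fix k assume k: "k \<in> {1..m}"
  show "(\<lambda>x. if k = 1 then (\<Sum>j=2..m. y j * (- inverse (x 1) * x j)) - y 1 + inverse (x 1)
                else - inverse (x 1) * x (m + 2 - k)) \<in> PiM {1..m} (\<lambda>_. lborel) \<rightarrow>\<^sub>M lborel"
  proof (cases "k = 1")
    case True
    have "(\<lambda>x. (\<Sum>j=2..m. y j * (- inverse (x 1) * x j)) - y 1 + inverse (x 1)) \<in> borel_measurable (PiM {1..m} (\<lambda>_. lborel))"
      using k by (intro borel_measurable_add borel_measurable_diff borel_measurable_sum borel_measurable_times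
          borel_measurable_uminus borel_measurable_inverse comp_meas borel_measurable_const) auto
    then show ?thesis using True by (simp add: measurable_lborel2)
  next
    case False
    have [measurable]: "(\<lambda>x. x 1) \<in> borel_measurable (PiM {1..m} (\<lambda>_. lborel :: real measure))"
      using k by (intro comp_meas) auto
    have [measurable]: "(\<lambda>x. x (m + 2 - k)) \<in> borel_measurable (PiM {1..m} (\<lambda>_. lborel :: real measure))"
      using k False by (intro comp_meas) auto
    have "(\<lambda>x. - inverse (x 1) * x (m + 2 - k)) \<in> borel_measurable (PiM {1..m} (\<lambda>_. lborel :: real measure))"
      by (intro borel_measurable_add borel_measurable_diff borel_measurable_sum borel_measurable_times
          borel_measurable_uminus borel_measurable_inverse comp_meas borel_measurable_const) (use k False in auto)
    then show ?thesis using False by (simp add: measurable_lborel2)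
  qed
qed

lemma Psi_meas: "(\<lambda>x. Psi m y (v x) x) \<in> PiM J (\<lambda>_. lborel) \<rightarrow>\<^sub>M PiM {1..m} (\<lambda>_. lborel)"
  if "{2..m} \<subseteq> J" and vm: "v \<in> borel_measurable (PiM J (\<lambda>_. lborel))"
  unfolding Psi_def
proof (rule measurable_restrict)
  fix k assume k: "k \<in> {1..m}"
  show "(\<lambda>x. if k = 1 then (\<Sum>j=2..m. y j * x (m + 2 - j)) - y 1 + v x else x k) \<in> PiM J (\<lambda>_. lborel) \<rightarrow>\<^sub>M lborel"
  proof (cases "k = 1")
    case True
    have jJ: "m + 2 - j \<in> J" if "j \<in> {2..m}" for j
    proof -
      have "m + 2 - j \<in> {2..m}" using that by auto
      thus ?thesis using \<open>{2..m} \<subseteq> J\<close> by blast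
    qed
    have "(\<lambda>x. (\<Sum>j=2..m. y j * x (m + 2 - j)) - y 1 + v x) \<in> borel_measurable (PiM J (\<lambda>_. lborel :: real measure))"
      by (intro borel_measurable_add borel_measurable_diff borel_measurable_sum borel_measurable_times
          comp_meas borel_measurable_const vm) (use jJ in auto)
    then show ?thesis using True by (simp add: measurable_lborel2)
  next
    case False
    have "(\<lambda>x. x k) \<in> borel_measurable (PiM J (\<lambda>_. lborel :: real measure))"
      by (intro comp_meas) (use k False that in auto)
    then show ?thesis using False by (simp add: measurable_lborel2)
  qed
qed


lemma Psi_upd1: "Psi m y v (r(1:=t)) = Psi m y v r"
  unfolding Psi_def by (intro ext) (auto intro!: sum.cong)

lemma Psi_ext: "s \<in> extensional {2..m} \<Longrightarrow> 1 \<le> m \<Longrightarrow>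
   Psi m y v s = s(1 := (\<Sum>j=2..m. y j * s (m + 2 - j)) - y 1 + v)"
  unfolding Psi_def by (intro ext) (auto simp: extensional_def)

lemma Tm_upd: "r \<in> extensional {2..m} \<Longrightarrow>
   Tm m y (r(1:=t)) = Psi m y (inverse t) (\<lambda>k\<in>{2..m}. (- inverse t) * r (m + 2 - k))"
proof (intro ext)
  fix k assume r: "r \<in> extensional {2..m}"
  show "Tm m y (r(1:=t)) k = Psi m y (inverse t) (\<lambda>k\<in>{2..m}. (- inverse t) * r (m + 2 - k)) k"
  proof (cases "k = 1")
    case True
    have "(\<Sum>j=2..m. y j * (- inverse t * (r(1:=t)) j)) = (\<Sum>j=2..m. y j * (\<lambda>k\<in>{2..m}. (- inverse t) * r (m + 2 - k)) (m + 2 - j))"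
      by (intro sum.cong) auto
    then show ?thesis using True by (simp add: Tm_def Psi_def)
  next
    case False
    then show ?thesis by (auto simp: Tm_def Psi_def)
  qed
qed


lemma cov_nn:
  fixes m :: nat and y :: "nat \<Rightarrow> real" and h :: "(nat \<Rightarrow> real) \<Rightarrow> ennreal"
  assumes m: "1 \<le> m" and h[measurable]: "h \<in> borel_measurable (PiM {1..m} (\<lambda>_. lborel))"
  shows "(\<integral>\<^sup>+x. ennreal (\<bar>inverse (x 1)\<bar> ^ (m+1)) * h (Tm m y x) \<partial>PiM {1..m} (\<lambda>_. lborel))
       = (\<integral>\<^sup>+x. h x \<partial>PiM {1..m} (\<lambda>_. lborel))"
proof -
  let ?L = "\<lambda>_::nat. lborel :: real measure"
  define R where "R = {2..m}"
  have IR: "{1..m} = insert 1 R" "finite R" "1 \<notin> R" using m by (auto simp: R_def)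
  interpret P: product_sigma_finite ?L by (rule psf)
  have hI[measurable]: "h \<in> borel_measurable (PiM (insert 1 R) ?L)" using h IR by simp
  have Tmm[measurable]: "Tm m y \<in> PiM (insert 1 R) ?L \<rightarrow>\<^sub>M PiM {1..m} ?L"
    using Tm_meas[of m y] IR by simp
  have x1[measurable]: "(\<lambda>x. x 1) \<in> borel_measurable (PiM (insert 1 R) ?L)" by (intro comp_meas) auto
  define Phi where "Phi x = ennreal (\<bar>inverse (x 1)\<bar> ^ (m+1)) * h (Tm m y x)" for x
  define Theta where "Theta x = ennreal ((inverse (x 1))^2) * h (Psi m y (inverse (x 1)) x)" for x
  have Psim[measurable]: "(\<lambda>x. Psi m y (inverse (x 1)) x) \<in> PiM (insert 1 R) ?L \<rightarrow>\<^sub>M PiM {1..m} ?L"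
    by (rule Psi_meas[OF _ borel_measurable_inverse[OF x1]]) (auto simp: R_def)
  have Phim[measurable]: "Phi \<in> borel_measurable (PiM (insert 1 R) ?L)"
    unfolding Phi_def by measurable
  have Thetam[measurable]: "Theta \<in> borel_measurable (PiM (insert 1 R) ?L)"
    unfolding Theta_def by measurable
  have upd[measurable]: "(\<lambda>r. r(1 := t)) \<in> PiM R ?L \<rightarrow>\<^sub>M PiM (insert 1 R) ?L" for t
    by (rule measurable_fun_upd[where J=R]) auto
  have pert: "(\<integral>\<^sup>+r. Phi (r(1:=t)) \<partial>PiM R ?L) = (\<integral>\<^sup>+r. Theta (r(1:=t)) \<partial>PiM R ?L)" for t
  proof (cases "t = 0")
    case True
    then show ?thesis using m by (simp add: Phi_def Theta_def)
  next
    case False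
    define c where "c = - inverse t"
    have c: "c \<noteq> 0" using False by (simp add: c_def)
    have Hm: "(\<lambda>s. h (Psi m y (inverse t) s)) \<in> borel_measurable (PiM R ?L)"
      using measurable_comp[OF Psi_meas[of m R "\<lambda>_. inverse t" y] h] by (simp add: R_def comp_def)
    have hTm: "(\<lambda>r. h (Tm m y (r(1:=t)))) \<in> borel_measurable (PiM R ?L)"
      using measurable_comp[OF measurable_comp[OF upd[of t] Tmm] h] by (simp add: comp_def)
    have "(\<integral>\<^sup>+r. Phi (r(1:=t)) \<partial>PiM R ?L) = ennreal (\<bar>inverse t\<bar> ^ (m+1)) * (\<integral>\<^sup>+r. h (Tm m y (r(1:=t))) \<partial>PiM R ?L)"
      unfolding Phi_def using hTm by (simp add: nn_integral_cmult)
    also have "(\<integral>\<^sup>+r. h (Tm m y (r(1:=t))) \<partial>PiM R ?L)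
        = (\<integral>\<^sup>+r. h (Psi m y (inverse t) (\<lambda>k\<in>R. c * r ((\<lambda>k. m + 2 - k) k))) \<partial>PiM R ?L)"
    proof (intro nn_integral_cong)
      fix r assume "r \<in> space (PiM R ?L)"
      hence "r \<in> extensional {2..m}" by (simp add: space_PiM PiE_def R_def)
      from Tm_upd[OF this, of y t]
      show "h (Tm m y (r(1:=t))) = h (Psi m y (inverse t) (\<lambda>k\<in>R. c * r ((\<lambda>k. m + 2 - k) k)))"
        by (simp add: R_def c_def)
    qed
    also have "ennreal (\<bar>inverse t\<bar> ^ (m+1)) = ennreal ((inverse t)^2) * ennreal (\<bar>c\<bar> ^ card R)"
    proof -
      have cR: "card R = m - 1" by (simp add: R_def)
      have mm: "m + 1 = 2 + (m - 1)" using m by simp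
      have "\<bar>inverse t\<bar> ^ (m+1) = \<bar>inverse t\<bar>^2 * \<bar>inverse t\<bar>^(m-1)"
        by (subst mm, rule power_add)
      moreover have "\<bar>c\<bar> = \<bar>inverse t\<bar>" by (simp add: c_def)
      moreover have "(inverse t)^2 = \<bar>inverse t\<bar>^2" by (rule power2_abs[symmetric])
      ultimately have "\<bar>inverse t\<bar> ^ (m+1) = (inverse t)^2 * \<bar>c\<bar> ^ card R"
        by (simp only: cR)
      then show ?thesis by (simp add: ennreal_mult)
    qed
    also have "ennreal ((inverse t)^2) * ennreal (\<bar>c\<bar> ^ card R) *
        (\<integral>\<^sup>+r. h (Psi m y (inverse t) (\<lambda>k\<in>R. c * r ((\<lambda>k. m + 2 - k) k))) \<partial>PiM R ?L)
       = ennreal ((inverse t)^2) * (\<integral>\<^sup>+s. h (Psi m y (inverse t) s) \<partial>PiM R ?L)"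
      by (subst mult.assoc, subst nn_scale_perm[OF IR(2) c _ _ Hm]) (auto simp: R_def)
    also have "\<dots> = (\<integral>\<^sup>+r. Theta (r(1:=t)) \<partial>PiM R ?L)"
      unfolding Theta_def using Hm by (simp add: Psi_upd1 Psi_upd1[simplified] nn_integral_cmult)
    finally show ?thesis .
  qed
  have "(\<integral>\<^sup>+x. ennreal (\<bar>inverse (x 1)\<bar> ^ (m+1)) * h (Tm m y x) \<partial>PiM {1..m} ?L)
      = (\<integral>\<^sup>+x. Phi x \<partial>PiM (insert 1 R) ?L)" unfolding Phi_def IR(1) by (rule refl)
  also have "\<dots> = (\<integral>\<^sup>+t. (\<integral>\<^sup>+r. Phi (r(1:=t)) \<partial>PiM R ?L) \<partial>lborel)"
    by (rule P.product_nn_integral_insert_rev[OF IR(2,3) Phim])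
  also have "\<dots> = (\<integral>\<^sup>+t. (\<integral>\<^sup>+r. Theta (r(1:=t)) \<partial>PiM R ?L) \<partial>lborel)"
    by (simp only: pert)
  also have "\<dots> = (\<integral>\<^sup>+x. Theta x \<partial>PiM (insert 1 R) ?L)"
    by (rule P.product_nn_integral_insert_rev[OF IR(2,3) Thetam, symmetric])
  also have "\<dots> = (\<integral>\<^sup>+s. (\<integral>\<^sup>+t. Theta (s(1:=t)) \<partial>lborel) \<partial>PiM R ?L)"
    by (rule P.product_nn_integral_insert[OF IR(2,3) Thetam])
  also have "\<dots> = (\<integral>\<^sup>+s. (\<integral>\<^sup>+u. h (s(1:=u)) \<partial>lborel) \<partial>PiM R ?L)"
  proof (rule nn_integral_cong)
    fix s assume s: "s \<in> space (PiM R ?L)"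
    have se: "s \<in> extensional {2..m}" using s by (simp add: space_PiM PiE_def R_def)
    have gm: "(\<lambda>u. h (s(1:=u))) \<in> borel_measurable borel"
      using measurable_comp[OF measurable_component_update[OF s IR(3)] hI] by (simp add: comp_def)
    have "(\<integral>\<^sup>+t. Theta (s(1:=t)) \<partial>lborel)
        = (\<integral>\<^sup>+t. ennreal ((inverse t)^2) * h (s(1 := ((\<Sum>j=2..m. y j * s (m + 2 - j)) - y 1) + inverse t)) \<partial>lborel)"
      unfolding Theta_def by (intro nn_integral_cong) (simp add: Psi_upd1 Psi_upd1[simplified] Psi_ext[OF se m] add.commute add.left_commute)
    also have "\<dots> = (\<integral>\<^sup>+u. h (s(1:=u)) \<partial>lborel)"
      by (rule inv_nn[OF gm])
    finally show "(\<integral>\<^sup>+t. Theta (s(1:=t)) \<partial>lborel) = (\<integral>\<^sup>+u. h (s(1:=u)) \<partial>lborel)" .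
  qed
  also have "\<dots> = (\<integral>\<^sup>+x. h x \<partial>PiM (insert 1 R) ?L)"
    by (rule P.product_nn_integral_insert[OF IR(2,3) hI, symmetric])
  also have "\<dots> = (\<integral>\<^sup>+x. h x \<partial>PiM {1..m} ?L)" unfolding IR(1) by (rule refl)
  finally show ?thesis .
qed


lemma AE_x1_nonzero:
  fixes m :: nat
  assumes m: "1 \<le> m"
  shows "AE x in PiM {1..m} (\<lambda>_. lborel :: real measure). x 1 \<noteq> 0"
proof (rule AE_I')
  let ?A = "\<lambda>i::nat. if i = 1 then {0::real} else UNIV"
  show "{x \<in> space (PiM {1..m} (\<lambda>_. lborel :: real measure)). \<not> x 1 \<noteq> 0} \<subseteq> Pi\<^sub>E {1..m} ?A"
    by (auto simp: space_PiM PiE_iff extensional_def)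
  show "Pi\<^sub>E {1..m} ?A \<in> null_sets (PiM {1..m} (\<lambda>_. lborel :: real measure))"
  proof -
    have "Pi\<^sub>E {1..m} ?A \<in> sets (PiM {1..m} (\<lambda>_. lborel :: real measure))"
      by (intro sets_PiM_I_finite) auto
    moreover have "emeasure (PiM {1..m} (\<lambda>_. lborel :: real measure)) (Pi\<^sub>E {1..m} ?A) = 0"
      using m by (subst product_sigma_finite.emeasure_PiM[OF psf]) (auto intro!: prod_zero bexI[of _ 1])
    ultimately show ?thesis by (simp add: null_sets_def)
  qed
qed

lemma cov_integral:
  fixes G F :: "(nat \<Rightarrow> real) \<Rightarrow> complex" and m :: nat and y :: "nat \<Rightarrow> real"
  assumes m: "1 \<le> m"
    and Gm[measurable]: "G \<in> borel_measurable (PiM {1..m} (\<lambda>_. lborel))"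
    and Fm[measurable]: "F \<in> borel_measurable (PiM {1..m} (\<lambda>_. lborel))"
    and FG: "\<And>x. x \<in> space (PiM {1..m} (\<lambda>_. lborel)) \<Longrightarrow> x 1 \<noteq> 0 \<Longrightarrow>
              F x = (\<bar>inverse (x 1)\<bar> ^ (m+1)) *\<^sub>R G (Tm m y x)"
  shows "(LINT x | PiM {1..m} (\<lambda>_. lborel). F x) = (LINT z | PiM {1..m} (\<lambda>_. lborel). G z)"
proof -
  let ?M = "PiM {1..m} (\<lambda>_. lborel :: real measure)"
  define J where "J x = \<bar>inverse (x 1)\<bar> ^ (m+1)" for x :: "nat \<Rightarrow> real"
  have x1[measurable]: "(\<lambda>x. x 1) \<in> borel_measurable ?M" using m by (intro comp_meas) auto
  have Jm[measurable]: "J \<in> borel_measurable ?M" unfolding J_def by measurable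
  have Tmm[measurable]: "Tm m y \<in> ?M \<rightarrow>\<^sub>M ?M" by (rule Tm_meas)
  note Tmm' = Tmm[simplified]
  note Gm' = Gm[simplified] and Fm' = Fm[simplified] and Jm' = Jm[simplified]
  have GT: "(\<lambda>x. G (Tm m y x)) \<in> borel_measurable ?M" by measurable
  note GT' = GT[simplified]
  have Jme: "(\<lambda>x. ennreal (J x)) \<in> borel_measurable ?M" by measurable
  note Jme' = Jme[simplified]
  have D: "distr (density ?M (\<lambda>x. ennreal (J x))) ?M (Tm m y) = ?M"
  proof (rule measure_eqI)
    fix A assume A: "A \<in> sets (distr (density ?M (\<lambda>x. ennreal (J x))) ?M (Tm m y))"
    hence A': "A \<in> sets ?M" by simp
    have "emeasure (distr (density ?M (\<lambda>x. ennreal (J x))) ?M (Tm m y)) A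
        = emeasure (density ?M (\<lambda>x. ennreal (J x))) (Tm m y -` A \<inter> space ?M)"
      using A' Tmm by (subst emeasure_distr) auto
    also have "\<dots> = (\<integral>\<^sup>+x. ennreal (J x) * indicator (Tm m y -` A \<inter> space ?M) x \<partial>?M)"
      using A' Jme Jme' by (subst emeasure_density) (auto intro: measurable_sets[OF Tmm] measurable_sets[OF Tmm'])
    also have "\<dots> = (\<integral>\<^sup>+x. ennreal (\<bar>inverse (x 1)\<bar> ^ (m+1)) * indicator A (Tm m y x) \<partial>?M)"
      by (intro nn_integral_cong) (auto simp: J_def indicator_def)
    also have "\<dots> = (\<integral>\<^sup>+x. indicator A x \<partial>?M)"
      using A' by (intro cov_nn m) auto
    also have "\<dots> = emeasure ?M A" using A' by simp
    finally show "emeasure (distr (density ?M (\<lambda>x. ennreal (J x))) ?M (Tm m y)) A = emeasure ?M A" .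
  qed simp
  have "(LINT z | ?M. G z) = (LINT z | distr (density ?M (\<lambda>x. ennreal (J x))) ?M (Tm m y). G z)"
    by (simp only: D)
  also have "\<dots> = (LINT x | density ?M (\<lambda>x. ennreal (J x)). G (Tm m y x))"
    using Tmm Tmm' Gm Gm' by (subst integral_distr) auto
  also have "\<dots> = (LINT x | ?M. J x *\<^sub>R G (Tm m y x))"
    using GT GT' Jm Jm' by (subst integral_density) (auto simp: J_def)
  also have "\<dots> = (LINT x | ?M. F x)"
  proof (rule integral_cong_AE)
    show "(\<lambda>x. J x *\<^sub>R G (Tm m y x)) \<in> borel_measurable ?M" by measurable
    show "F \<in> borel_measurable ?M" by (rule Fm)
    show "AE x in ?M. J x *\<^sub>R G (Tm m y x) = F x"
      using AE_x1_nonzero[OF m] AE_space[of ?M] by eventually_elim (simp add: FG J_def)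
  qed
  finally show ?thesis ..
qed


lemma pos_less: "i < j \<Longrightarrow> pos i < pos (j::'n::{finite,linorder})"
proof -
  assume ij: "i < j"
  have "{k. k < i} \<subset> {k. k < j}" using ij by auto
  hence "card {k. k < i} < card {k. k < j}" by (intro psubset_card_mono) auto
  thus ?thesis by (simp add: pos_def)
qed

lemma pos_inj: "inj (pos :: 'n::{finite,linorder} \<Rightarrow> nat)"
proof (rule injI)
  fix i j :: 'n assume "pos i = pos j"
  thus "i = j" using pos_less[of i j] pos_less[of j i] by (cases i j rule: linorder_cases) auto
qed

lemma pos_eq_iff: "pos i = pos j \<longleftrightarrow> i = (j::'n::{finite,linorder})"
  using pos_inj by (auto dest: injD)

lemma pos_range: "pos (i::'n::{finite,linorder}) \<in> {1..CARD('n)}"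
proof -
  have "{k. k < i} \<subset> UNIV" by auto
  hence "card {k. k < i} < CARD('n)" by (intro psubset_card_mono) auto
  thus ?thesis by (simp add: pos_def)
qed

lemma pos_ge1: "1 \<le> pos (i::'n::{finite,linorder})"
  using pos_range[of i] by auto
lemma pos_le: "pos (i::'n::{finite,linorder}) \<le> CARD('n)"
  using pos_range[of i] by auto

lemma pos_image: "pos ` (UNIV :: 'n::{finite,linorder} set) = {1..CARD('n)}"
proof -
  have "pos ` (UNIV :: 'n set) \<subseteq> {1..CARD('n)}" by (rule image_subsetI, rule pos_range)
  moreover have "card (pos ` (UNIV :: 'n set)) = card {1..CARD('n)}"
    using card_image[OF pos_inj] by simp
  ultimately show ?thesis by (intro card_subset_eq) auto
qed

lemma pos_eq1: "pos i = 1 \<longleftrightarrow> i = Min (UNIV::'n::{finite,linorder} set)"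
proof
  assume "pos i = 1"
  hence "card {k. k < i} = 0" by (simp add: pos_def)
  hence "{k. k < i} = {}" by simp
  hence "\<forall>k. \<not> k < i" by auto
  thus "i = Min UNIV" by (metis Min_le finite UNIV_I antisym not_le)
next
  assume "i = Min (UNIV::'n set)"
  hence "{k. k < i} = {}" by (auto simp: not_less intro: Min_le)
  thus "pos i = 1" by (simp add: pos_def)
qed

lemma sum_over_pos: "(\<Sum>k\<in>(UNIV::'n::{finite,linorder} set). h (pos k)) = (\<Sum>q\<in>{1..CARD('n)}. h q)"
  by (subst pos_image[symmetric]) (simp add: sum.reindex[OF pos_inj])

lemma mult_pos:
  fixes A B :: "((real, 'n::{finite,linorder}) vec, 'n) vec"
  assumes "\<And>i k. A$i$k = a (pos i) (pos k)" "\<And>k j. B$k$j = b (pos k) (pos j)"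
  shows "(A ** B)$i$j = (\<Sum>q\<in>{1..CARD('n)}. a (pos i) q * b q (pos j))"
  by (simp add: matrix_matrix_mult_def assms sum_over_pos[where h="\<lambda>q. a (pos i) q * b q (pos j)"])

definition Up :: "nat \<Rightarrow> (nat \<Rightarrow> real) \<Rightarrow> nat \<Rightarrow> nat \<Rightarrow> real" where
  "Up n x q r = (if q = r then 1 else if q = 1 then x (n + 1 - r) else 0)"
definition Utp :: "nat \<Rightarrow> (nat \<Rightarrow> real) \<Rightarrow> nat \<Rightarrow> nat \<Rightarrow> real" where
  "Utp n y q r = (if q = r then 1 else if r = n then - y q else 0)"
definition Wp :: "nat \<Rightarrow> nat \<Rightarrow> nat \<Rightarrow> real" where
  "Wp n q r = (if q + r = n + 1 then 1 else 0)"

lemma umat_pos: "(umat x :: ((real, 'n::{finite,linorder}) vec, 'n) vec) $ i $ j = Up CARD('n) x (pos i) (pos j)"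
  by (simp add: umat_def Up_def pos_eq_iff)
lemma utmat_pos: "(utmat y :: ((real, 'n::{finite,linorder}) vec, 'n) vec) $ i $ j = Utp CARD('n) y (pos i) (pos j)"
  by (simp add: utmat_def Utp_def pos_eq_iff)
lemma wlong_pos: "(wlong :: ((real, 'n::{finite,linorder}) vec, 'n) vec) $ i $ j = Wp CARD('n) (pos i) (pos j)"
  by (simp add: wlong_def Wp_def)

lemma sum_delta_nat: "finite S \<Longrightarrow> (\<Sum>s\<in>S. (if s = c then h s else 0)) = (if c \<in> S then h c else (0::real))"
  by (simp add: sum.delta)

lemma UW: "r \<in> {1..n} \<Longrightarrow> (\<Sum>s\<in>{1..n}. Utp n y q s * Wp n s r) = Utp n y q (n + 1 - r)"
proof -
  assume r: "r \<in> {1..n}"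
  have "(\<Sum>s\<in>{1..n}. Utp n y q s * Wp n s r) = (\<Sum>s\<in>{1..n}. if s = n + 1 - r then Utp n y q s else 0)"
    using r by (intro sum.cong) (auto simp: Wp_def)
  also have "\<dots> = Utp n y q (n + 1 - r)" using r by (subst sum_delta_nat) auto
  finally show ?thesis .
qed

definition Gp :: "nat \<Rightarrow> (nat \<Rightarrow> real) \<Rightarrow> (nat \<Rightarrow> real) \<Rightarrow> nat \<Rightarrow> nat \<Rightarrow> real" where
  "Gp n y x q r = Utp n y q (n + 1 - r) + (if r \<noteq> 1 then Utp n y q n * x (n + 1 - r) else 0)"

lemma WU: "r \<in> {1..n} \<Longrightarrow> 1 \<le> n \<Longrightarrow> (\<Sum>s\<in>{1..n}. Utp n y q (n + 1 - s) * Up n x s r) = Gp n y x q r"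
proof -
  assume r: "r \<in> {1..n}" and n: "1 \<le> n"
  have "(\<Sum>s\<in>{1..n}. Utp n y q (n + 1 - s) * Up n x s r)
     = (\<Sum>s\<in>{1..n}. (if s = r then Utp n y q (n + 1 - s) else 0))
       + (\<Sum>s\<in>{1..n}. (if s = 1 then (if r \<noteq> 1 then Utp n y q (n + 1 - s) * x (n + 1 - r) else 0) else 0))"
    by (subst sum.distrib[symmetric], intro sum.cong) (auto simp: Up_def)
  also have "\<dots> = Gp n y x q r" using r n by (simp add: sum_delta_nat Gp_def)
  finally show ?thesis .
qed


lemma row1:
  fixes n :: nat and a :: real and x y z :: "nat \<Rightarrow> real"
  assumes n: "2 \<le> n" and ax: "a * x 1 = -1"
    and zr: "\<And>r. r \<in> {2..n-1} \<Longrightarrow> z r = a * x (n + 1 - r)"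
    and zK: "z 1 - (\<Sum>s=2..n-1. y s * z (n + 1 - s)) = - y 1 - a"
    and r: "r \<in> {1..n}"
  shows "(if r = 1 then a else 0) + (\<Sum>s=2..n. z (n + 1 - s) * Gp n y x s r) = Gp n y x 1 r"
proof -
  have ins: "{2..n} = insert n {2..n-1}" "n \<notin> {2..n-1}" using n by auto
  have K: "(\<Sum>s=2..n. z (n + 1 - s) * Utp n y s n) = - y 1 - a"
  proof -
    have "(\<Sum>s=2..n. z (n + 1 - s) * Utp n y s n) = z 1 * Utp n y n n + (\<Sum>s=2..n-1. z (n + 1 - s) * Utp n y s n)"
      unfolding ins(1) by (subst sum.insert) (use ins(2) in auto)
    also have "(\<Sum>s=2..n-1. z (n + 1 - s) * Utp n y s n) = - (\<Sum>s=2..n-1. y s * z (n + 1 - s))"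
      by (subst sum_negf[symmetric], intro sum.cong) (auto simp: Utp_def)
    finally show ?thesis using zK by (simp add: Utp_def)
  qed
  show ?thesis
  proof (cases "r = 1")
    case True
    have "(\<Sum>s=2..n. z (n + 1 - s) * Gp n y x s r) = (\<Sum>s=2..n. z (n + 1 - s) * Utp n y s n)"
      using True by (intro sum.cong) (auto simp: Gp_def)
    then show ?thesis using True K n by (simp add: Gp_def Utp_def)
  next
    case False
    have r2: "2 \<le> r" "r \<le> n" using False r by auto
    have "(\<Sum>s=2..n. z (n + 1 - s) * Gp n y x s r)
       = (\<Sum>s=2..n. (if s = n + 1 - r then z (n + 1 - s) else 0)) + x (n + 1 - r) * (\<Sum>s=2..n. z (n + 1 - s) * Utp n y s n)"
    proof -
      have "(\<Sum>s=2..n. z (n + 1 - s) * Gp n y x s r)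
        = (\<Sum>s=2..n. (if s = n + 1 - r then z (n + 1 - s) else 0) + x (n + 1 - r) * (z (n + 1 - s) * Utp n y s n))"
        by (intro sum.cong) (use False r2 in \<open>auto simp: Gp_def Utp_def algebra_simps\<close>)
      then show ?thesis by (simp add: sum.distrib sum_distrib_left)
    qed
    also have "(\<Sum>s=2..n. (if s = n + 1 - r then z (n + 1 - s) else 0)) = (if n + 1 - r \<in> {2..n} then z r else 0)"
      using r2 by (subst sum_delta_nat) auto
    finally have S: "(\<Sum>s=2..n. z (n + 1 - s) * Gp n y x s r) = (if n + 1 - r \<in> {2..n} then z r else 0) + x (n + 1 - r) * (- y 1 - a)"
      using K by simp
    have G1: "Gp n y x 1 r = (if r = n then 1 else 0) + (- y 1) * x (n + 1 - r)"
      using False r2 n by (auto simp: Gp_def Utp_def)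
    show ?thesis
    proof (cases "r = n")
      case True
      then show ?thesis using S G1 False ax n by (simp add: algebra_simps)
    next
      case False
      hence "r \<in> {2..n-1}" using r2 by auto
      moreover have "n + 1 - r \<in> {2..n}" using r2 False by auto
      ultimately show ?thesis using S G1 False \<open>r \<noteq> 1\<close> zr[of r] r2 by (simp add: algebra_simps)
    qed
  qed
qed


lemma detA:
  fixes A :: "((real,'n::finite) vec,'n) vec"
  assumes unit: "\<And>i j. i \<noteq> k \<Longrightarrow> A$i$j = (if i = j then 1 else 0)"
  shows "det A = A$k$k"
proof -
  let ?P = "{p. p permutes (UNIV::'n set)}"
  have fin: "finite ?P" by (rule finite_permutations) simp
  have idP: "id \<in> ?P" by (simp add: permutes_id)
  have zero: "(\<Prod>i\<in>UNIV. A$i$(p i)) = 0" if p: "p \<in> ?P - {id}" for p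
  proof -
    have "\<exists>i. i \<noteq> k \<and> p i \<noteq> i"
    proof (rule ccontr)
      assume "\<not> (\<exists>i. i \<noteq> k \<and> p i \<noteq> i)"
      hence fx: "\<And>i. i \<noteq> k \<Longrightarrow> p i = i" by blast
      have inj: "inj p" using p permutes_inj by blast
      have "p k = k"
      proof (rule ccontr)
        assume "p k \<noteq> k"
        hence "p (p k) = p k" using fx by blast
        hence "p k = k" using inj by (auto dest: injD)
        thus False using \<open>p k \<noteq> k\<close> by simp
      qed
      hence "p = id" using fx by (intro ext) (metis id_apply)
      thus False using p by simp
    qed
    then obtain i where "i \<noteq> k" "p i \<noteq> i" by blast
    hence "A$i$(p i) = 0" using unit[of i "p i"] by auto
    thus ?thesis by (intro prod_zero) auto
  qed
  have "det A = (\<Sum>p\<in>?P. of_int (sign p) * (\<Prod>i\<in>UNIV. A$i$(p i)))" by (simp add: det_def)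
  also have "\<dots> = of_int (sign (id::'n\<Rightarrow>'n)) * (\<Prod>i\<in>UNIV. A$i$(id i)) + (\<Sum>p\<in>?P - {id}. of_int (sign p) * (\<Prod>i\<in>UNIV. A$i$(p i)))"
    by (rule sum.remove[OF fin idP])
  also have "(\<Sum>p\<in>?P - {id}. of_int (sign p) * (\<Prod>i\<in>UNIV. A$i$(p i))) = 0"
    using zero by (intro sum.neutral) auto
  also have "(\<Prod>i\<in>UNIV. A$i$(id i)) = A$k$k * (\<Prod>i\<in>UNIV - {k}. A$i$i)"
    by (simp add: prod.remove)
  also have "(\<Prod>i\<in>UNIV - {k}. A$i$i) = 1" using unit by (intro prod.neutral) auto
  finally show ?thesis by (simp add: sign_id)
qed

lemma detB:
  fixes A :: "((real,'n::{finite,linorder}) vec,'n) vec"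
  assumes row: "\<And>j. j \<noteq> k \<Longrightarrow> A$k$j = 0"
  shows "det A = A$k$k * block_det (UNIV - {k}) A"
proof -
  define S where "S = (UNIV::'n set) - {k}"
  have kS: "k \<notin> S" and US: "UNIV = insert k S" by (auto simp: S_def)
  define P where "P = {p. p permutes (UNIV::'n set)}"
  define P1 where "P1 = {p. p permutes S}"
  have fin: "finite P" unfolding P_def by (rule finite_permutations) (rule finite_class.finite_UNIV)
  have sub: "P1 \<subseteq> P"
  proof
    fix p assume "p \<in> P1" hence "p permutes S" by (simp add: P1_def)
    hence "p permutes UNIV" by (rule permutes_subset) simp
    thus "p \<in> P" by (simp add: P_def)
  qed
  have "det A = (\<Sum>p\<in>P. of_int (sign p) * (\<Prod>i\<in>UNIV. A$i$(p i)))" by (simp add: det_def P_def)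
  also have "\<dots> = (\<Sum>p\<in>P1. of_int (sign p) * (\<Prod>i\<in>UNIV. A$i$(p i)))"
  proof (rule sum.mono_neutral_right[OF fin sub], rule ballI)
    fix p assume p: "p \<in> P - P1"
    have pU: "p permutes UNIV" using p by (simp add: P_def)
    have "p k \<noteq> k"
    proof
      assume pk: "p k = k"
      have "p permutes S"
        by (rule permutes_superset[OF pU]) (use pk in \<open>auto simp: S_def\<close>)
      thus False using p by (simp add: P1_def)
    qed
    hence "A$k$(p k) = 0" using row by simp
    hence "(\<Prod>i\<in>UNIV. A$i$(p i)) = 0" by (intro prod_zero) auto
    thus "of_int (sign p) * (\<Prod>i\<in>UNIV. A$i$(p i)) = 0" by simp
  qed
  also have "\<dots> = (\<Sum>p\<in>P1. A$k$k * (of_int (sign p) * (\<Prod>i\<in>S. A$i$(p i))))"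
  proof (rule sum.cong[OF refl])
    fix p assume "p \<in> P1"
    hence "p permutes S" by (simp add: P1_def)
    hence pk: "p k = k" using permutes_not_in kS by metis
    have "(\<Prod>i\<in>UNIV. A$i$(p i)) = A$k$(p k) * (\<Prod>i\<in>S. A$i$(p i))"
      unfolding US using kS by (subst prod.insert) auto
    thus "of_int (sign p) * (\<Prod>i\<in>UNIV. A$i$(p i)) = A$k$k * (of_int (sign p) * (\<Prod>i\<in>S. A$i$(p i)))"
      using pk by simp
  qed
  also have "\<dots> = A$k$k * block_det (UNIV - {k}) A"
    by (simp add: block_det_def sum_distrib_left P1_def S_def[symmetric])
  finally show ?thesis .
qed


lemma pos_Max: "pos (Max (UNIV::'n::{finite,linorder} set)) = CARD('n)"
proof -
  have "{j. j < Max (UNIV::'n set)} = UNIV - {Max UNIV}"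
    by (auto simp: order.strict_iff_order intro: Max_ge)
  hence "card {j. j < Max (UNIV::'n set)} = CARD('n) - 1" by (simp add: card_Diff_singleton)
  thus ?thesis by (simp add: pos_def)
qed

lemma pos_eqn: "pos i = CARD('n) \<longleftrightarrow> i = Max (UNIV::'n::{finite,linorder} set)"
  using pos_Max[where 'n='n] pos_eq_iff[of i "Max UNIV"] by auto

lemma det_umat: "det (umat w :: ((real,'n::{finite,linorder}) vec,'n) vec) = 1" (is "det ?U = 1")
proof -
  have "det ?U = ?U $ Min UNIV $ Min UNIV"
    by (rule detA) (auto simp: umat_def pos_eq1 pos_eq1[simplified])
  thus ?thesis by (simp add: umat_def)
qed

lemma det_utmat: "det (utmat y :: ((real,'n::{finite,linorder}) vec,'n) vec) = 1" (is "det ?U = 1")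
proof -
  have "det ?U = det (transpose ?U)" by simp
  also have "\<dots> = transpose ?U $ Max UNIV $ Max UNIV"
    by (rule detA) (auto simp: utmat_def transpose_def pos_eqn)
  finally show ?thesis by (simp add: utmat_def transpose_def)
qed

lemma WW: "q \<in> {1..n} \<Longrightarrow> r \<in> {1..n} \<Longrightarrow> (\<Sum>s\<in>{1..n}. Wp n q s * Wp n s r) = (if q = r then 1 else 0)"
proof -
  assume q: "q \<in> {1..n}" and r: "r \<in> {1..n}"
  have "(\<Sum>s\<in>{1..n}. Wp n q s * Wp n s r) = (\<Sum>s\<in>{1..n}. if s = n + 1 - q then Wp n s r else 0)"
    using q by (intro sum.cong) (auto simp: Wp_def)
  also have "\<dots> = Wp n (n + 1 - q) r" using q by (subst sum_delta_nat) auto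
  finally show ?thesis using q r by (auto simp: Wp_def)
qed

lemma det_wlong: "\<bar>det (wlong :: ((real,'n::{finite,linorder}) vec,'n) vec)\<bar> = 1" (is "\<bar>det ?W\<bar> = 1")
proof -
  have "?W ** ?W = mat 1"
    unfolding vec_eq_iff
  proof (intro allI)
    fix i j
    have "(?W ** ?W) $ i $ j = (\<Sum>s\<in>{1..CARD('n)}. Wp CARD('n) (pos i) s * Wp CARD('n) s (pos j))"
      by (rule mult_pos) (simp_all add: wlong_pos)
    also have "\<dots> = (if pos i = pos j then 1 else 0)" by (rule WW) (simp_all add: pos_ge1 pos_le pos_ge1[simplified])
    finally show "(?W ** ?W) $ i $ j = mat 1 $ i $ j"
      by (simp add: pos_eq_iff mat_def)
  qed
  hence "det ?W * det ?W = 1"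
    by (metis det_mul det_I)
  hence "det ?W = 1 \<or> det ?W = -1"
    using power2_eq_1_iff[of "det ?W"] by (simp add: power2_eq_square)
  thus ?thesis by auto
qed


definition Pp :: "nat \<Rightarrow> real \<Rightarrow> (nat \<Rightarrow> real) \<Rightarrow> (nat \<Rightarrow> real) \<Rightarrow> nat \<Rightarrow> nat \<Rightarrow> real" where
  "Pp n a y x q r = (if q = 1 then (if r = 1 then a else 0) else Gp n y x q r)"

lemma UP:
  fixes n :: nat and a :: real and x y z :: "nat \<Rightarrow> real"
  assumes n: "2 \<le> n" and ax: "a * x 1 = -1"
    and zr: "\<And>r. r \<in> {2..n-1} \<Longrightarrow> z r = a * x (n + 1 - r)"
    and zK: "z 1 - (\<Sum>s=2..n-1. y s * z (n + 1 - s)) = - y 1 - a"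
    and q: "q \<in> {1..n}" and r: "r \<in> {1..n}"
  shows "(\<Sum>s\<in>{1..n}. Up n z q s * Pp n a y x s r) = Gp n y x q r"
proof -
  have ins: "{1..n} = insert 1 {2..n}" "1 \<notin> {2..n}" using n by auto
  have "(\<Sum>s\<in>{1..n}. Up n z q s * Pp n a y x s r)
      = (\<Sum>s\<in>{1..n}. (if s = q then Pp n a y x s r else 0)) + (\<Sum>s\<in>{1..n}. (if q = 1 \<and> s \<noteq> 1 then z (n + 1 - s) * Pp n a y x s r else 0))"
    by (subst sum.distrib[symmetric], intro sum.cong) (auto simp: Up_def)
  also have "(\<Sum>s\<in>{1..n}. (if s = q then Pp n a y x s r else 0)) = Pp n a y x q r"
    using q by (subst sum_delta_nat) auto
  also have "(\<Sum>s\<in>{1..n}. (if q = 1 \<and> s \<noteq> 1 then z (n + 1 - s) * Pp n a y x s r else 0))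
      = (if q = 1 then (\<Sum>s=2..n. z (n + 1 - s) * Gp n y x s r) else 0)"
  proof (cases "q = 1")
    case True
    have "(\<Sum>s\<in>{1..n}. (if q = 1 \<and> s \<noteq> 1 then z (n + 1 - s) * Pp n a y x s r else 0))
        = (\<Sum>s\<in>{2..n}. (if q = 1 \<and> s \<noteq> 1 then z (n + 1 - s) * Pp n a y x s r else 0))"
      unfolding ins(1) using ins(2) by (subst sum.insert) auto
    also have "\<dots> = (\<Sum>s=2..n. z (n + 1 - s) * Gp n y x s r)"
      using True by (intro sum.cong) (auto simp: Pp_def)
    finally show ?thesis using True by simp
  qed simp
  finally show ?thesis
    using row1[OF n ax zr zK r] by (auto simp: Pp_def)
qed

lemma decomp:
  fixes G P :: "((real,'n::{finite,linorder}) vec,'n) vec" and x y z :: "nat \<Rightarrow> real" and a :: real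
  assumes G: "G = utmat y ** wlong ** umat x"
    and P: "P = (\<chi> i j. Pp CARD('n) a y x (pos i) (pos j))"
    and n: "2 \<le> CARD('n)" and ax: "a * x 1 = -1"
    and zr: "\<And>r. r \<in> {2..CARD('n)-1} \<Longrightarrow> z r = a * x (CARD('n) + 1 - r)"
    and zK: "z 1 - (\<Sum>s=2..CARD('n)-1. y s * z (CARD('n) + 1 - s)) = - y 1 - a"
  shows "G = umat z ** P" "P \<in> Pgrp" "a_entry P = a" "\<bar>lowerB_det P\<bar> = inverse \<bar>a\<bar>" "invertible G"
proof -
  have Pent: "P $ i $ j = Pp CARD('n) a y x (pos i) (pos j)" for i j by (simp add: P)
  have W1: "(utmat y ** wlong :: ((real,'n) vec,'n) vec) $ i $ k = Utp CARD('n) y (pos i) (CARD('n) + 1 - pos k)" for i k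
  proof -
    have "(utmat y ** wlong :: ((real,'n) vec,'n) vec) $ i $ k = (\<Sum>s\<in>{1..CARD('n)}. Utp CARD('n) y (pos i) s * Wp CARD('n) s (pos k))"
      by (rule mult_pos) (simp_all add: utmat_pos wlong_pos)
    also have "\<dots> = Utp CARD('n) y (pos i) (CARD('n) + 1 - pos k)" by (rule UW) (rule pos_range)
    finally show ?thesis .
  qed
  have Gent: "G $ i $ j = Gp CARD('n) y x (pos i) (pos j)" for i j
  proof -
    have "G $ i $ j = (\<Sum>s\<in>{1..CARD('n)}. Utp CARD('n) y (pos i) (CARD('n) + 1 - s) * Up CARD('n) x s (pos j))"
      unfolding G by (rule mult_pos) (simp_all add: W1 umat_pos)
    also have "\<dots> = Gp CARD('n) y x (pos i) (pos j)" by (rule WU) (use n pos_range in auto)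
    finally show ?thesis .
  qed
  show GP: "G = umat z ** P"
    unfolding vec_eq_iff
  proof (intro allI)
    fix i j
    have "(umat z ** P) $ i $ j = (\<Sum>s\<in>{1..CARD('n)}. Up CARD('n) z (pos i) s * Pp CARD('n) a y x s (pos j))"
      by (rule mult_pos) (simp_all add: umat_pos Pent)
    also have "\<dots> = Gp CARD('n) y x (pos i) (pos j)"
      by (rule UP[OF n ax zr zK]) (auto simp: pos_ge1[simplified] pos_le)
    finally show "G $ i $ j = (umat z ** P) $ i $ j" by (simp add: Gent)
  qed
  note pm = pos_eq1[THEN iffD2, OF refl]
  have Pmin: "P $ Min UNIV $ Min UNIV = a" by (simp add: Pent pm pm[simplified] Pp_def)
  show ae: "a_entry P = a" by (simp add: a_entry_def Pmin)
  have a0: "a \<noteq> 0" using ax by auto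
  have row: "P $ Min UNIV $ j = 0" if "j \<noteq> Min UNIV" for j
    using that by (simp add: Pent Pp_def pos_eq1 pos_eq1[simplified])
  have S: "lowerB_det P = block_det (UNIV - {Min UNIV}) P"
    unfolding lowerB_det_def
  proof (rule arg_cong[where f="\<lambda>S. block_det S P"], intro set_eqI)
    fix i show "i \<in> {i. 2 \<le> pos i} \<longleftrightarrow> i \<in> UNIV - {Min UNIV}"
      using pos_ge1[of i] pos_eq1[of i] by auto
  qed
  have detP: "det P = a * lowerB_det P"
    using detB[of "Min UNIV" P, OF row] by (simp add: S Pmin)
  have dG: "\<bar>det G\<bar> = 1"
    unfolding G by (simp add: det_mul det_utmat det_umat det_wlong)
  moreover have "det G = det P" unfolding GP by (simp add: det_mul det_umat)
  ultimately have "\<bar>a\<bar> * \<bar>lowerB_det P\<bar> = 1" using detP by (metis abs_mult)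
  thus L: "\<bar>lowerB_det P\<bar> = inverse \<bar>a\<bar>" using a0 by (simp add: field_simps)
  show "P \<in> Pgrp" unfolding Pgrp_def
    using ae a0 L by (auto simp: Pent Pp_def a_entry_def)
  show "invertible G" using dG by (auto simp: invertible_det_nz)
qed


lemma cpow_real: "0 < b \<Longrightarrow> complex_of_real b powr s = exp (s * of_real (ln b))"
  by (simp add: powr_def Ln_of_real)

lemma mat_meas:
  fixes Mf :: "'a \<Rightarrow> ((real,'n::finite) vec,'n) vec"
  assumes "\<And>i j. (\<lambda>x. Mf x $ i $ j) \<in> borel_measurable M"
  shows "Mf \<in> borel_measurable M"
proof -
  have comp: "(axis a (axis b 1) :: ((real,'n) vec,'n) vec) $ i $ k = (if a = i then (if b = k then 1 else 0) else 0)" for a b i k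
    by (simp add: axis_def)
  have ent: "(\<Sum>a\<in>UNIV. \<Sum>b\<in>UNIV. c a b *\<^sub>R axis a (axis b 1) :: ((real,'n) vec,'n) vec) $ i $ k = c i k" for c i k
  proof -
    have "(\<Sum>a\<in>UNIV. \<Sum>b\<in>UNIV. c a b *\<^sub>R axis a (axis b 1) :: ((real,'n) vec,'n) vec) $ i $ k
        = (\<Sum>a\<in>UNIV. \<Sum>b\<in>UNIV. c a b * (if a = i then (if b = k then 1 else 0) else 0))"
      by (simp add: sum_component comp del: vector_scaleR_component) (simp add: comp)
    also have "\<dots> = (\<Sum>a\<in>UNIV. if a = i then (\<Sum>b\<in>UNIV. c a b * (if b = k then 1 else 0)) else 0)"
      by (intro sum.cong) auto
    also have "\<dots> = (\<Sum>b\<in>UNIV. c i b * (if b = k then 1 else 0))"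
      by (subst sum.delta) auto
    also have "\<dots> = (\<Sum>b\<in>UNIV. if b = k then c i b else 0)"
      by (intro sum.cong) auto
    also have "\<dots> = c i k" by simp
    finally show ?thesis .
  qed
  have eq: "Mf = (\<lambda>x. \<Sum>i\<in>UNIV. \<Sum>j\<in>UNIV. (Mf x $ i $ j) *\<^sub>R axis i (axis j 1))"
    by (intro ext) (simp only: vec_eq_iff ent simp_thms)
  show ?thesis
    by (subst eq) (intro borel_measurable_sum borel_measurable_scaleR assms borel_measurable_const)
qed

lemma det_cont: "continuous_on UNIV (det :: ((real,'n::finite) vec,'n) vec \<Rightarrow> real)"
  unfolding det_def[abs_def] by (intro continuous_intros)

lemma GL_borel: "(GLset :: (((real,'n::finite) vec,'n) vec) set) \<in> sets borel"
proof -
  have "(GLset :: (((real,'n) vec,'n) vec) set) = {A. det A \<noteq> 0}"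
    by (auto simp: GLset_def invertible_det_nz)
  moreover have "open {A :: ((real,'n) vec,'n) vec. det A \<noteq> 0}"
    by (rule open_Collect_neq[OF det_cont continuous_on_const])
  ultimately show ?thesis by simp
qed

lemma umat_ent_meas:
  fixes i j :: "'n::{finite,linorder}"
  shows "(\<lambda>z. (umat z :: ((real,'n) vec,'n) vec) $ i $ j) \<in> borel_measurable (PiM {1..CARD('n) - 1} (\<lambda>_. lborel))"
proof (cases "i = j")
  case True then show ?thesis by (simp add: umat_def)
next
  case False
  show ?thesis
  proof (cases "pos i = 1")
    case True
    have "pos j \<noteq> 1" using True False pos_eq_iff[of i j] by auto
    hence "CARD('n) + 1 - pos j \<in> {1..CARD('n) - 1}" using pos_ge1[of j] pos_le[of j] by auto
    hence "(\<lambda>z. z (CARD('n) + 1 - pos j)) \<in> borel_measurable (PiM {1..CARD('n) - 1} (\<lambda>_. lborel :: real measure))"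
      by (rule comp_meas)
    then show ?thesis using True False by (simp add: umat_def)
  next
    case F2: False
    then show ?thesis using False by (simp add: umat_def)
  qed
qed

lemma umat_GL: "umat z \<in> (GLset :: (((real,'n::{finite,linorder}) vec,'n) vec) set)"
  by (simp add: GLset_def invertible_det_nz det_umat)

lemma g_GL: "utmat y ** wlong ** umat x \<in> (GLset :: (((real,'n::{finite,linorder}) vec,'n) vec) set)"
proof -
  have "\<bar>det (utmat y ** wlong ** umat x :: ((real,'n) vec,'n) vec)\<bar> = 1"
    by (simp add: det_mul det_utmat det_umat det_wlong)
  thus ?thesis by (auto simp: GLset_def invertible_det_nz)
qed


lemma cpow_inv: "0 < b \<Longrightarrow> inverse (complex_of_real b) powr s = exp (- (s * of_real (ln b)))"
proof -
  assume b: "0 < b"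
  have "complex_of_real (inverse b) powr s = exp (s * of_real (ln (inverse b)))"
    by (rule cpow_real) (simp add: b)
  thus ?thesis using b by (simp add: ln_inverse)
qed

lemma pointwise:
  fixes f :: "((real, 'n::{finite,linorder}) vec, 'n) vec \<Rightarrow> complex"
    and \<epsilon> :: nat and \<nu> :: complex and y x :: "nat \<Rightarrow> real"
  assumes n: "CARD('n) \<ge> 2" and fW: "f \<in> Wspace (- \<nu>) \<epsilon>" and x1: "x 1 \<noteq> 0"
  defines "z \<equiv> Tm (CARD('n) - 1) y x"
  shows "f (utmat y ** wlong ** umat x) = (\<bar>inverse (x 1)\<bar> ^ (CARD('n) - 1 + 1)) *\<^sub>R
     (f (umat z) * rpow \<bar>(\<Sum>j=2..CARD('n)-1. y j * z (CARD('n) + 1 - j)) - y 1 - z 1\<bar> (\<nu> - of_nat CARD('n) / 2)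
       * of_real (sgn ((\<Sum>j=2..CARD('n)-1. y j * z (CARD('n) + 1 - j)) - y 1 - z 1) ^ \<epsilon>))"
proof -
  define a where "a = - inverse (x 1)"
  have ax: "a * x 1 = -1" using x1 by (simp add: a_def)
  have zr: "z r = a * x (CARD('n) + 1 - r)" if "r \<in> {2..CARD('n)-1}" for r
  proof -
    have "CARD('n) - 1 + 2 - r = CARD('n) + 1 - r" using n that by auto
    thus ?thesis using that n by (auto simp: z_def Tm_def a_def)
  qed
  have zs: "z (CARD('n) + 1 - s) = a * x s" if "s \<in> {2..CARD('n)-1}" for s
  proof -
    have "CARD('n) + 1 - s \<in> {2..CARD('n)-1}" "CARD('n) + 1 - (CARD('n) + 1 - s) = s" using that n by auto
    thus ?thesis using zr by metis
  qed
  have z1: "z 1 = (\<Sum>j=2..CARD('n)-1. y j * (a * x j)) - y 1 - a"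
  proof -
    have "Suc 0 \<le> CARD('n) - Suc 0" using n by simp
    thus ?thesis by (simp add: z_def Tm_def a_def)
  qed
  have sumeq: "(\<Sum>s=2..CARD('n)-1. y s * z (CARD('n) + 1 - s)) = (\<Sum>j=2..CARD('n)-1. y j * (a * x j))"
  proof (rule sum.cong[OF refl])
    fix s assume "s \<in> {2..CARD('n)-1}"
    from zs[OF this] show "y s * z (CARD('n) + 1 - s) = y s * (a * x s)" by simp
  qed
  have zK: "z 1 - (\<Sum>s=2..CARD('n)-1. y s * z (CARD('n) + 1 - s)) = - y 1 - a"
    using z1 sumeq by simp
  have L: "(\<Sum>j=2..CARD('n)-1. y j * z (CARD('n) + 1 - j)) - y 1 - z 1 = a"
    using zK by simp
  note D = decomp[OF refl refl n ax zr zK]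
  let ?P = "(\<chi> i j. Pp CARD('n) a y x (pos i) (pos j)) :: ((real, 'n) vec, 'n) vec"
  have ae: "a_entry ?P = a" by (rule D(3))
  have ld: "\<bar>lowerB_det ?P\<bar> = inverse \<bar>a\<bar>" by (rule D(4))
  have a0: "a \<noteq> 0" using ax by auto
  define b where "b = \<bar>a\<bar>"
  have b0: "0 < b" using a0 by (simp add: b_def)
  define lb where "lb = complex_of_real (ln b)"
  have law: "f (umat z ** ?P) =
        rpow \<bar>a_entry ?P\<bar> (- (of_nat (CARD('n) - 1)) * (- \<nu> - of_nat CARD('n) / 2) / of_nat CARD('n))
        * of_real (sgn (a_entry ?P) ^ \<epsilon>)
        * rpow \<bar>lowerB_det ?P\<bar> ((- \<nu> - of_nat CARD('n) / 2) / of_nat CARD('n)) * f (umat z)"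
    using fW umat_GL[of z] D(2) unfolding Wspace_def by blast
  have "f (utmat y ** wlong ** umat x) = f (umat z ** ?P)" using D(1) by simp
  also have "\<dots> = exp ((- (of_nat (CARD('n) - 1)) * (- \<nu> - of_nat CARD('n) / 2) / of_nat CARD('n)) * lb)
        * of_real (sgn a ^ \<epsilon>)
        * exp (((- \<nu> - of_nat CARD('n) / 2) / of_nat CARD('n)) * (- lb)) * f (umat z)"
    unfolding law ae ld rpow_def
    using b0 by (simp add: cpow_real cpow_inv b_def[symmetric] lb_def ln_inverse)
  also have "\<dots> = exp (of_nat CARD('n) * lb) * (f (umat z) * exp ((\<nu> - of_nat CARD('n) / 2) * lb) * of_real (sgn a ^ \<epsilon>))"
  proof -
    have nn: "of_nat (CARD('n) - 1) = (of_nat CARD('n) - 1 :: complex)" using n by (simp add: of_nat_diff)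
    have cn: "(of_nat CARD('n) :: complex) \<noteq> 0" by simp
    have "(- (of_nat (CARD('n) - 1)) * (- \<nu> - of_nat CARD('n) / 2) / of_nat CARD('n)) * lb
          + ((- \<nu> - of_nat CARD('n) / 2) / of_nat CARD('n)) * (- lb)
          = of_nat CARD('n) * lb + (\<nu> - of_nat CARD('n) / 2) * lb"
      unfolding nn using cn by (simp add: field_simps)
    hence "exp ((- (of_nat (CARD('n) - 1)) * (- \<nu> - of_nat CARD('n) / 2) / of_nat CARD('n)) * lb)
          * exp (((- \<nu> - of_nat CARD('n) / 2) / of_nat CARD('n)) * (- lb))
          = exp (of_nat CARD('n) * lb) * exp ((\<nu> - of_nat CARD('n) / 2) * lb)"
      by (simp add: exp_add[symmetric])
    thus ?thesis by (simp add: algebra_simps)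
  qed
  also have "\<dots> = (\<bar>inverse (x 1)\<bar> ^ (CARD('n) - 1 + 1)) *\<^sub>R
     (f (umat z) * rpow \<bar>(\<Sum>j=2..CARD('n)-1. y j * z (CARD('n) + 1 - j)) - y 1 - z 1\<bar> (\<nu> - of_nat CARD('n) / 2)
       * of_real (sgn ((\<Sum>j=2..CARD('n)-1. y j * z (CARD('n) + 1 - j)) - y 1 - z 1) ^ \<epsilon>))"
  proof -
    have "\<bar>inverse (x 1)\<bar> = b" by (simp add: b_def a_def)
    moreover have "CARD('n) - 1 + 1 = CARD('n)" using n by simp
    moreover have "exp (of_nat CARD('n) * lb) = complex_of_real (b ^ CARD('n))"
      using b0 by (simp add: exp_of_nat_mult lb_def exp_of_real)
    ultimately show ?thesis
      unfolding L rpow_def using b0 by (simp add: scaleR_conv_of_real cpow_real b_def[symmetric] lb_def)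
  qed
  finally show ?thesis .
qed


theorem proposition3p26:
  fixes f :: "((real, 'n::{finite,linorder}) vec, 'n) vec \<Rightarrow> complex"
    and \<epsilon> :: nat and \<nu> :: complex and y :: "nat \<Rightarrow> real"
  assumes "CARD('n) \<ge> 2"
    and "\<epsilon> < 2"
    and "Re \<nu> > real CARD('n) / 2 - 1"
    and "f \<in> Wspace (- \<nu>) \<epsilon>"
  shows "Iop \<nu> f (utmat y) =
    (LINT z | Leb (CARD('n) - 1).
       f (umat z)
       * rpow \<bar>(\<Sum>j=2..CARD('n)-1. y j * z (CARD('n) + 1 - j)) - y 1 - z 1\<bar>
              (\<nu> - of_nat CARD('n) / 2)
       * of_real (sgn ((\<Sum>j=2..CARD('n)-1. y j * z (CARD('n) + 1 - j)) - y 1 - z 1) ^ \<epsilon>))"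
proof -
  note n = assms(1) and fW = assms(4)
  define m where "m = CARD('n) - 1"
  have m1: "1 \<le> m" using n by (simp add: m_def)
  from fW have "smooth_on GLset f" by (simp add: Wspace_def)
  then obtain FF where "f \<in> FF" "\<forall>g\<in>FF. continuous_on GLset g" unfolding smooth_on_def by blast
  hence fc: "continuous_on GLset f" by blast
  define f' where "f' = (\<lambda>A. indicator GLset A *\<^sub>R f A)"
  have f'm[measurable]: "f' \<in> borel_measurable borel"
    unfolding f'_def by (rule borel_measurable_continuous_on_indicator[OF GL_borel fc])
  have f'eq: "f' A = f A" if "A \<in> GLset" for A using that by (simp add: f'_def)
  have uent: "(\<lambda>z. (umat z :: ((real,'n) vec,'n) vec) $ i $ j) \<in> borel_measurable (PiM {1..m} (\<lambda>_. lborel))" for i j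
    unfolding m_def by (rule umat_ent_meas)
  have um[measurable]: "(\<lambda>z. umat z :: ((real,'n) vec,'n) vec) \<in> borel_measurable (PiM {1..m} (\<lambda>_. lborel))"
    by (rule mat_meas) (rule uent)
  have gm: "(\<lambda>x. utmat y ** wlong ** umat x :: ((real,'n) vec,'n) vec) \<in> borel_measurable (PiM {1..m} (\<lambda>_. lborel))"
  proof (rule mat_meas)
    fix i j
    have "(\<lambda>x. (utmat y ** wlong ** umat x :: ((real,'n) vec,'n) vec) $ i $ j)
        = (\<lambda>x. \<Sum>k\<in>UNIV. (utmat y ** wlong :: ((real,'n) vec,'n) vec) $ i $ k * umat x $ k $ j)"
      by (simp add: matrix_matrix_mult_def)
    also have "\<dots> \<in> borel_measurable (PiM {1..m} (\<lambda>_. lborel))"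
      by (intro borel_measurable_sum borel_measurable_times borel_measurable_const uent)
    finally show "(\<lambda>x. (utmat y ** wlong ** umat x :: ((real,'n) vec,'n) vec) $ i $ j) \<in> borel_measurable (PiM {1..m} (\<lambda>_. lborel))" .
  qed
  define F where "F x = f (utmat y ** wlong ** umat x)" for x
  define L where "L z = (\<Sum>j=2..CARD('n)-1. y j * z (CARD('n) + 1 - j)) - y 1 - z 1" for z :: "nat \<Rightarrow> real"
  define G where "G z = f (umat z) * rpow \<bar>L z\<bar> (\<nu> - of_nat CARD('n) / 2) * of_real (sgn (L z) ^ \<epsilon>)" for z
  have Fm: "F \<in> borel_measurable (PiM {1..m} (\<lambda>_. lborel))"
  proof -
    have "F = (\<lambda>x. f' (utmat y ** wlong ** umat x))"
      by (intro ext) (simp add: F_def f'eq g_GL)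
    also have "\<dots> \<in> borel_measurable (PiM {1..m} (\<lambda>_. lborel))"
      using measurable_comp[OF gm f'm] by (simp add: comp_def)
    finally show ?thesis .
  qed
  have Lm[measurable]: "L \<in> borel_measurable (PiM {1..m} (\<lambda>_. lborel))"
  proof -
    have c: "(\<lambda>z. z (CARD('n) + 1 - j)) \<in> borel_measurable (PiM {1..m} (\<lambda>_. lborel :: real measure))"
      if "j \<in> {2..CARD('n)-1}" for j
      by (rule comp_meas) (use that n in \<open>auto simp: m_def\<close>)
    have c1: "(\<lambda>z. z 1) \<in> borel_measurable (PiM {1..m} (\<lambda>_. lborel :: real measure))"
      by (rule comp_meas) (use m1 in auto)
    show ?thesis unfolding L_def[abs_def]
      by (intro borel_measurable_diff borel_measurable_sum borel_measurable_times borel_measurable_const c c1)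
  qed
  have Gm: "G \<in> borel_measurable (PiM {1..m} (\<lambda>_. lborel))"
  proof -
    have "G = (\<lambda>z. f' (umat z) * complex_of_real \<bar>L z\<bar> powr (\<nu> - of_nat CARD('n) / 2) * of_real (sgn (L z) ^ \<epsilon>))"
      by (intro ext) (simp add: G_def f'eq umat_GL rpow_def)
    also have "\<dots> \<in> borel_measurable (PiM {1..m} (\<lambda>_. lborel))"
      by measurable
    finally show ?thesis .
  qed
  have FG: "F x = (\<bar>inverse (x 1)\<bar> ^ (m+1)) *\<^sub>R G (Tm m y x)" if "x 1 \<noteq> 0" for x
    unfolding F_def G_def L_def m_def using pointwise[where x=x and y=y, OF n fW that] by simp
  have "(LINT x | PiM {1..m} (\<lambda>_. lborel). F x) = (LINT z | PiM {1..m} (\<lambda>_. lborel). G z)"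
    by (rule cov_integral[OF m1 Gm Fm FG])
  thus ?thesis
    by (simp add: Iop_def Leb_def F_def G_def L_def m_def)
qed


end
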